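(* Let $\mathbf{A}$ be an $n\times n$ skew-symmetric matrix with real entries and let $\mathbf{v}\in\mathbb{R}^n$. Then the polynomial \[\sum_{I\subseteq[n]}\det\bigl((\mathbf{A}+\mathbf{v}\mathbf{v}^T)[I]\bigr)\prod_{i\in I}z_i\in\mathbb{C}[z_1,\dots,z_n]\] is Hurwitz stable.
   Context: $\mathbf{M}[I]$ is the principal submatrix indexed by $I$, with $\det(\mathbf{M}[\emptyset])=1$. Skew-symmetric: $\mathbf{A}_{ij}=-\mathbf{A}_{ji}$, $\mathbf{A}_{ii}=0$. A polynomial $f\in\mathbb{C}[z_1,\dots,z_n]$ is Hurwitz stable if $f(z_1,\dots,z_n)\ne0$ whenever $\mathrm{Re}(z_i)>0$ for all $i$. *)

theory Defs
  imports "HOL-Analysis.Analysis"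
begin

text \<open>Determinant of the principal submatrix M[I], written out via the Leibniz
  formula (the same formula that defines det), permutations of the index set I.
  For I = {} this is 1.\<close>
definition principal_minor :: "real^'n^'n \<Rightarrow> 'n set \<Rightarrow> real" where
  "principal_minor M I =
     (\<Sum>p\<in>{p. p permutes I}. of_int (sign p) * (\<Prod>i\<in>I. M $ i $ (p i)))"

definition skew_symmetric :: "real^'n^'n \<Rightarrow> bool" where
  "skew_symmetric A \<longleftrightarrow> (\<forall>i j. A $ i $ j = - A $ j $ i)"

definition hurwitz_stable :: "(('n \<Rightarrow> complex) \<Rightarrow> complex) \<Rightarrow> bool" where
  "hurwitz_stable f \<longleftrightarrow> (\<forall>z. (\<forall>i. 0 < Re (z i)) \<longrightarrow> f z \<noteq> 0)"

end

theory Submission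
  imports Defs
begin


lemma ker_exists:
  fixes B :: "complex^'n^'n"
  assumes "det B = 0"
  shows "\<exists>x. x \<noteq> 0 \<and> B *v x = 0"
proof -
  have lin: "Vector_Spaces.linear (*s) (*s) ((*v) B)"
    by (simp add: matrix_vector_mul_linear_gen)
  have "\<not> inj ((*v) B)"
    using det_nz_iff_inj_gen[OF lin] assms by (simp add: matrix_of_matrix_vector_mul)
  then obtain a b where "a \<noteq> b" "B *v a = B *v b" unfolding inj_def by blast
  then show ?thesis
    by (intro exI[of _ "a - b"]) (simp add: matrix_vector_mult_diff_distrib)
qed

lemma expand:
  fixes M :: "real^'n::finite^'n" and z :: "'n \<Rightarrow> complex"
  shows "det (\<chi> i j. (if i = j then 1 else 0) + z i * complex_of_real (M $ i $ j)) =
    (\<Sum>I\<in>Pow (UNIV :: 'n set). complex_of_real (principal_minor M I) * (\<Prod>i\<in>I. z i))"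
proof -
  let ?P = "{p. p permutes (UNIV :: 'n set)}"
  define g where "g p X = (if p permutes X then of_int (sign p) * ((\<Prod>i\<in>X. z i) *
       (\<Prod>i\<in>X. complex_of_real (M $ i $ p i))) else 0)" for p and X :: "'n set"
  have step: "of_int (sign p) * (\<Prod>i\<in>UNIV. (if i = p i then 1 else 0) + z i * complex_of_real (M $ i $ p i))
      = (\<Sum>X\<in>Pow UNIV. g p X)" if p: "p \<in> ?P" for p
  proof -
    have "(\<Prod>i\<in>UNIV. (if i = p i then 1 else 0) + z i * complex_of_real (M $ i $ p i))
       = (\<Prod>i\<in>UNIV. z i * complex_of_real (M $ i $ p i) + (if i = p i then 1 else 0))"
      by (simp add: add.commute)
    also have "\<dots> = (\<Sum>X\<in>Pow UNIV. (\<Prod>i\<in>X. z i * complex_of_real (M $ i $ p i)) *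
         (\<Prod>i\<in>UNIV - X. (if i = p i then 1 else 0)))"
      by (rule prod_add) simp
    finally have e: "(\<Prod>i\<in>UNIV. (if i = p i then 1 else 0) + z i * complex_of_real (M $ i $ p i))
       = (\<Sum>X\<in>Pow UNIV. (\<Prod>i\<in>X. z i * complex_of_real (M $ i $ p i)) *
         (\<Prod>i\<in>UNIV - X. (if i = p i then 1 else 0)))" .
    have d: "(\<Prod>i\<in>UNIV - X. (if i = p i then 1 else 0 :: complex)) = (if p permutes X then 1 else 0)" for X
    proof (cases "p permutes X")
      case True
      then have "\<forall>i\<in>UNIV - X. i = p i" using permutes_not_in by fastforce
      then show ?thesis using True by simp
    next
      case False
      have "\<exists>i\<in>UNIV - X. i \<noteq> p i"
      proof (rule ccontr)
        assume "\<not> ?thesis"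
        then have "\<forall>i. i \<notin> X \<longrightarrow> p i = i" by auto
        then have "p permutes X" using p unfolding permutes_def by auto
        then show False using False by simp
      qed
      then show ?thesis using False by (auto intro: prod_zero)
    qed
    show ?thesis unfolding e sum_distrib_left d g_def
      by (intro sum.cong refl) (simp add: prod.distrib)
  qed
  have "det (\<chi> i j. (if i = j then 1 else 0) + z i * complex_of_real (M $ i $ j))
     = (\<Sum>p\<in>?P. \<Sum>X\<in>Pow UNIV. g p X)"
    unfolding det_def by (intro sum.cong refl) (simp add: step)
  also have "\<dots> = (\<Sum>X\<in>Pow UNIV. \<Sum>p\<in>?P. g p X)" by (rule sum.swap)
  also have "\<dots> = (\<Sum>X\<in>Pow (UNIV :: 'n set). complex_of_real (principal_minor M X) * (\<Prod>i\<in>X. z i))"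
  proof (intro sum.cong refl)
    fix X :: "'n set"
    have sub: "{p. p permutes X} \<subseteq> ?P" using permutes_subset by blast
    have "(\<Sum>p\<in>?P. g p X) = (\<Sum>p\<in>{p. p permutes X}. g p X)"
      by (rule sum.mono_neutral_right) (use sub in \<open>auto simp: g_def\<close>)
    also have "\<dots> = complex_of_real (principal_minor M X) * (\<Prod>i\<in>X. z i)"
      unfolding principal_minor_def g_def of_real_sum sum_distrib_right
      by (intro sum.cong refl) (simp add: of_real_prod)
    finally show "(\<Sum>p\<in>?P. g p X) = complex_of_real (principal_minor M X) * (\<Prod>i\<in>X. z i)" .
  qed
  finally show ?thesis .
qed


lemma skew_re_zero:
  fixes A :: "real^'n::finite^'n" and r :: "'n \<Rightarrow> 'n \<Rightarrow> real"
  assumes "skew_symmetric A" and "\<And>i j. r i j = r j i"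
  shows "(\<Sum>i\<in>UNIV. \<Sum>j\<in>UNIV. A $ i $ j * r i j) = 0"
proof -
  let ?T = "(\<Sum>i\<in>UNIV. \<Sum>j\<in>UNIV. A $ i $ j * r i j)"
  have "?T = (\<Sum>j\<in>UNIV. \<Sum>i\<in>UNIV. A $ i $ j * r i j)" by (rule sum.swap)
  also have "\<dots> = (\<Sum>j\<in>UNIV. \<Sum>i\<in>UNIV. - (A $ j $ i * r j i))"
    using assms unfolding skew_symmetric_def by (intro sum.cong refl) (metis mult_minus_left)
  also have "\<dots> = - ?T" by (simp add: sum_negf)
  finally show ?thesis by simp
qed

lemma nonsing:
  fixes A :: "real^'n::finite^'n" and v :: "real^'n" and z :: "'n \<Rightarrow> complex"
  assumes skew: "skew_symmetric A" and z: "\<And>i. 0 < Re (z i)"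
  defines "M \<equiv> A + (\<chi> i j. v $ i * v $ j)"
  shows "det (\<chi> i j. (if i = j then 1 else 0) + z i * complex_of_real (M $ i $ j)) \<noteq> 0"
proof
  let ?B = "(\<chi> i j. (if i = j then 1 else 0) + z i * complex_of_real (M $ i $ j)) :: complex^'n^'n"
  assume "det ?B = 0"
  then obtain x where x0: "x \<noteq> 0" and bx: "?B *v x = 0" using ker_exists by blast
  define y where "y i = (\<Sum>j\<in>UNIV. complex_of_real (M $ i $ j) * x $ j)" for i
  have row: "x $ i + z i * y i = 0" for i
  proof -
    have "(?B *v x) $ i = (\<Sum>j\<in>UNIV. ((if i = j then 1 else 0) + z i * complex_of_real (M $ i $ j)) * x $ j)"
      by (simp add: matrix_vector_mult_def)
    also have "\<dots> = (\<Sum>j\<in>UNIV. (if i = j then x $ j else 0) + z i * (complex_of_real (M $ i $ j) * x $ j))"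
      by (intro sum.cong refl) (simp add: distrib_right)
    also have "\<dots> = x $ i + z i * y i"
      by (simp add: sum.distrib y_def sum_distrib_left)
    finally have "(?B *v x) $ i = x $ i + z i * y i" .
    then show ?thesis using bx by simp
  qed
  have zne: "z i \<noteq> 0" for i using z[of i] by auto
  have yi: "y i = - x $ i / z i" for i using row[of i] zne[of i]
    by (simp add: field_simps add_eq_0_iff)
  define Q where "Q = (\<Sum>i\<in>UNIV. cnj (x $ i) * y i)"
  obtain k where k: "x $ k \<noteq> 0" using x0 by (metis vec_eq_iff zero_index)
  have reinv: "Re (1 / z i) > 0" for i using z[of i] zne[of i]
    by (simp add: Re_divide complex_neq_0 divide_pos_pos add_pos_nonneg)
  have trm: "Re (cnj (x $ i) * y i) = - ((cmod (x $ i))^2 * Re (1 / z i))" for i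
  proof -
    have "cnj (x $ i) * y i = - (cnj (x $ i) * x $ i) * (1 / z i)" by (simp add: yi)
    also have "cnj (x $ i) * x $ i = complex_of_real ((cmod (x $ i))^2)"
      using complex_norm_square[of "x $ i"] by (simp only: mult.commute)
    finally have "cnj (x $ i) * y i = - (complex_of_real ((cmod (x $ i))^2) * (1 / z i))" by simp
    moreover have "Re (complex_of_real r * w) = r * Re w" for r w by simp
    ultimately show ?thesis by (simp only: uminus_complex.sel)
  qed
  have "Re Q < 0"
  proof -
    have "Re Q = (\<Sum>i\<in>UNIV. - ((cmod (x $ i))^2 * Re (1 / z i)))"
      unfolding Q_def Re_sum using trm by (intro sum.cong refl) presburger
    also have "\<dots> < 0"
    proof -
      have "(\<Sum>i\<in>UNIV. (cmod (x $ i))^2 * Re (1 / z i)) > 0"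
      proof (rule sum_pos2[where i=k])
        show "0 < (cmod (x $ k))^2 * Re (1 / z k)" using k reinv[of k] by simp
        show "\<And>i. i \<in> UNIV \<Longrightarrow> 0 \<le> (cmod (x $ i))^2 * Re (1 / z i)"
          using reinv by (simp add: less_imp_le)
      qed auto
      then show ?thesis by (simp add: sum_negf)
    qed
    finally show ?thesis .
  qed
  moreover have "Re Q \<ge> 0"
  proof -
    define s where "s = (\<Sum>j\<in>UNIV. complex_of_real (v $ j) * x $ j)"
    have "Q = (\<Sum>i\<in>UNIV. \<Sum>j\<in>UNIV. complex_of_real (A $ i $ j) * (cnj (x $ i) * x $ j))
            + cnj s * s"
    proof -
      have "cnj s * s = (\<Sum>i\<in>UNIV. \<Sum>j\<in>UNIV. complex_of_real (v $ i * v $ j) * (cnj (x $ i) * x $ j))"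
        unfolding s_def cnj_sum sum_product by (intro sum.cong refl) simp
      have "Q = (\<Sum>i\<in>UNIV. \<Sum>j\<in>UNIV. complex_of_real (A $ i $ j) * (cnj (x $ i) * x $ j)
                 + complex_of_real (v $ i * v $ j) * (cnj (x $ i) * x $ j))"
        unfolding Q_def y_def M_def sum_distrib_left
        by (intro sum.cong refl) (simp add: algebra_simps)
      also have "\<dots> = (\<Sum>i\<in>UNIV. \<Sum>j\<in>UNIV. complex_of_real (A $ i $ j) * (cnj (x $ i) * x $ j))
            + (\<Sum>i\<in>UNIV. \<Sum>j\<in>UNIV. complex_of_real (v $ i * v $ j) * (cnj (x $ i) * x $ j))"
        by (simp add: sum.distrib)
      finally show ?thesis using \<open>cnj s * s = _\<close> by simp
    qed
    then have "Re Q = (\<Sum>i\<in>UNIV. \<Sum>j\<in>UNIV. A $ i $ j * Re (cnj (x $ i) * x $ j)) + (cmod s)^2"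
      by (simp add: Re_sum complex_norm_square[symmetric] mult.commute)
    also have "(\<Sum>i\<in>UNIV. \<Sum>j\<in>UNIV. A $ i $ j * Re (cnj (x $ i) * x $ j)) = 0"
      by (rule skew_re_zero[OF skew]) (simp add: algebra_simps)
    finally show ?thesis by simp
  qed
  ultimately show False by simp
qed

theorem lemma4p4:
  fixes A :: "real^'n::finite^'n" and v :: "real^'n"
  assumes "skew_symmetric A"
  shows "hurwitz_stable (\<lambda>z. \<Sum>I\<in>Pow (UNIV :: 'n set).
           complex_of_real (principal_minor (A + (\<chi> i j. v $ i * v $ j)) I) * (\<Prod>i\<in>I. z i))"
  unfolding hurwitz_stable_def
proof (intro allI impI)
  fix z :: "'n \<Rightarrow> complex"
  assume "\<forall>i. 0 < Re (z i)"
  then show "(\<Sum>I\<in>Pow (UNIV :: 'n set).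
           complex_of_real (principal_minor (A + (\<chi> i j. v $ i * v $ j)) I) * (\<Prod>i\<in>I. z i)) \<noteq> 0"
    using nonsing[OF assms, of z v] expand[of z "A + (\<chi> i j. v $ i * v $ j)"] by simp
qed

end
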